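(* Let $\sigma=\{\sigma_z\}_{z\in\mathbb{Z}}$ be i.i.d. strictly positive random variables with law $\mathbf{P}$, with $L(x):=1/\mathbf{P}(\sigma_0>x)$ slowly varying at infinity (i.e. $\lim_{u\to\infty}L(uv)/L(u)=1$ for every $v>0$). Let $h_t$ be any function with $h_t\to\infty$, $h_t^2=o(r_t)$, and such that, for all sufficiently large $t$, \[ L(\ell_t/h_t^3)>L(\ell_t)(1-1/h_t)\quad\text{and}\quad L(\ell_th_t^3)<L(\ell_t)(1+1/h_t).\] Then $\mathbf{P}(\mathcal{B}^h_t)\to1$ as $t\to\infty$, where $\mathcal{B}^h_t:=\{m_t>th_t^2/r_t\}$.
   Context: $\ell_t:=\min\{s\ge0: sL(s)\ge t\}$, $r_t:=L(\ell_t)$, $Z^{(1)}_t:=\min\{z\in\mathbb{Z}^+:\sigma_z>\ell_t\}$, $Z^{(2)}_t:=\max\{z\in\mathbb{Z}^-:\sigma_z>\ell_t\}$ (with $\mathbb{Z}^+$ the positive and $\mathbb{Z}^-$ the non-positive integers), $\Gamma_t:=\{Z^{(1)}_t,Z^{(2)}_t\}$ and $m_t:=\min_{z\in\Gamma_t}\sigma_z$. *)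

theory Defs
  imports "HOL-Probability.Probability" "HOL-Library.Landau_Symbols"
begin

definition tailL :: "'a measure \<Rightarrow> (int \<Rightarrow> 'a \<Rightarrow> real) \<Rightarrow> real \<Rightarrow> real" where
  "tailL M \<sigma> x = 1 / measure M {\<omega> \<in> space M. \<sigma> 0 \<omega> > x}"

definition ell :: "'a measure \<Rightarrow> (int \<Rightarrow> 'a \<Rightarrow> real) \<Rightarrow> real \<Rightarrow> real" where
  "ell M \<sigma> t = (LEAST s::real. 0 \<le> s \<and> t \<le> s * tailL M \<sigma> s)"

definition rr :: "'a measure \<Rightarrow> (int \<Rightarrow> 'a \<Rightarrow> real) \<Rightarrow> real \<Rightarrow> real" where
  "rr M \<sigma> t = tailL M \<sigma> (ell M \<sigma> t)"

definition Z1 :: "'a measure \<Rightarrow> (int \<Rightarrow> 'a \<Rightarrow> real) \<Rightarrow> real \<Rightarrow> 'a \<Rightarrow> int" where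
  "Z1 M \<sigma> t \<omega> = (LEAST z::int. 0 < z \<and> \<sigma> z \<omega> > ell M \<sigma> t)"

definition Z2 :: "'a measure \<Rightarrow> (int \<Rightarrow> 'a \<Rightarrow> real) \<Rightarrow> real \<Rightarrow> 'a \<Rightarrow> int" where
  "Z2 M \<sigma> t \<omega> = (GREATEST z::int. z \<le> 0 \<and> \<sigma> z \<omega> > ell M \<sigma> t)"

definition mt :: "'a measure \<Rightarrow> (int \<Rightarrow> 'a \<Rightarrow> real) \<Rightarrow> real \<Rightarrow> 'a \<Rightarrow> real" where
  "mt M \<sigma> t \<omega> = Min ((\<lambda>z. \<sigma> z \<omega>) ` {Z1 M \<sigma> t \<omega>, Z2 M \<sigma> t \<omega>})"

definition Bh :: "'a measure \<Rightarrow> (int \<Rightarrow> 'a \<Rightarrow> real) \<Rightarrow> (real \<Rightarrow> real) \<Rightarrow> real \<Rightarrow> 'a set" where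
  "Bh M \<sigma> h t = {\<omega> \<in> space M. mt M \<sigma> t \<omega> > t * (h t)\<^sup>2 / rr M \<sigma> t}"

end

theory Submission
  imports Defs "HOL-Real_Asymp.Real_Asymp"
begin


lemma int_least_pos:
  fixes P :: "int \<Rightarrow> bool"
  assumes "0 < z" "P z"
  shows "0 < (LEAST z. 0 < z \<and> P z) \<and> P (LEAST z. 0 < z \<and> P z) \<and> (LEAST z. 0 < z \<and> P z) \<le> z"
proof -
  define Q where "Q n \<longleftrightarrow> 0 < n \<and> P (int n)" for n
  have "Q (nat z)" using assms by (simp add: Q_def)
  define n where "n = (LEAST n. Q n)"
  have Qn: "Q n" unfolding n_def by (rule LeastI) fact
  have nle: "\<And>m. Q m \<Longrightarrow> n \<le> m" unfolding n_def by (rule Least_le)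
  have "(LEAST z. 0 < z \<and> P z) = int n"
  proof (rule Least_equality)
    show "0 < int n \<and> P (int n)" using Qn by (simp add: Q_def)
    fix y :: int assume "0 < y \<and> P y"
    then have "Q (nat y)" by (simp add: Q_def)
    then have "n \<le> nat y" by (rule nle)
    then show "int n \<le> y" using \<open>0 < y \<and> P y\<close> by linarith
  qed
  moreover have "n \<le> nat z" using nle \<open>Q (nat z)\<close> .
  ultimately show ?thesis using Qn assms by (simp add: Q_def)
qed

lemma int_greatest_nonpos:
  fixes P :: "int \<Rightarrow> bool"
  assumes "z \<le> 0" "P z"
  shows "(GREATEST z. z \<le> 0 \<and> P z) \<le> 0 \<and> P (GREATEST z. z \<le> 0 \<and> P z) \<and> z \<le> (GREATEST z. z \<le> 0 \<and> P z)"
proof -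
  define Q where "Q n \<longleftrightarrow> P (- int n)" for n
  have "Q (nat (-z))" using assms by (simp add: Q_def)
  define n where "n = (LEAST n. Q n)"
  have Qn: "Q n" unfolding n_def by (rule LeastI) fact
  have nle: "\<And>m. Q m \<Longrightarrow> n \<le> m" unfolding n_def by (rule Least_le)
  have "(GREATEST z. z \<le> 0 \<and> P z) = - int n"
  proof (rule Greatest_equality)
    show "- int n \<le> 0 \<and> P (- int n)" using Qn by (simp add: Q_def)
    fix y :: int assume "y \<le> 0 \<and> P y"
    then have "Q (nat (-y))" by (simp add: Q_def)
    then have "n \<le> nat (-y)" by (rule nle)
    then show "y \<le> - int n" using \<open>y \<le> 0 \<and> P y\<close> by linarith
  qed
  moreover have "n \<le> nat (-z)" using nle \<open>Q (nat (-z))\<close> .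
  ultimately show ?thesis using Qn assms by (simp add: Q_def)
qed

lemma (in prob_space) bound_lemma:
  fixes \<sigma> :: "int \<Rightarrow> 'a \<Rightarrow> real" and Zf :: "'a \<Rightarrow> int" and F :: "int set" and p :: "real \<Rightarrow> real"
  assumes rv: "\<And>z. \<sigma> z \<in> borel_measurable M"
    and indep: "indep_vars (\<lambda>_. borel) \<sigma> UNIV"
    and F: "finite F" "F \<noteq> {}"
    and Zf: "\<And>\<omega>. \<omega> \<in> space M \<Longrightarrow> (\<exists>z\<in>F. l < \<sigma> z \<omega>) \<Longrightarrow> Zf \<omega> \<in> F \<and> l < \<sigma> (Zf \<omega>) \<omega>"
    and xy: "x \<le> y" and ly: "l \<le> y"
    and pz: "\<And>z s. prob {\<omega>\<in>space M. s < \<sigma> z \<omega>} = p s"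
  shows "\<exists>A\<in>events. {\<omega>\<in>space M. \<sigma> (Zf \<omega>) \<omega> \<le> x} \<subseteq> A \<and>
           prob A \<le> (1 - p l) ^ card F + card F * (p l - p y)"
proof -
  note [measurable] = rv
  define A1 where "A1 = (\<Inter>z\<in>F. \<sigma> z -` {..l} \<inter> space M)"
  define A2 where "A2 = (\<Union>z\<in>F. {\<omega>\<in>space M. l < \<sigma> z \<omega>} - {\<omega>\<in>space M. y < \<sigma> z \<omega>})"
  have A1m: "A1 \<in> events" unfolding A1_def using F by (intro sets.finite_INT) auto
  have A2m: "A2 \<in> events" unfolding A2_def using F by (intro sets.finite_UN) auto
  have sub: "{\<omega>\<in>space M. \<sigma> (Zf \<omega>) \<omega> \<le> x} \<subseteq> A1 \<union> A2"
  proof safe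
    fix \<omega> assume w: "\<omega> \<in> space M" "\<sigma> (Zf \<omega>) \<omega> \<le> x" "\<omega> \<notin> A2"
    show "\<omega> \<in> A1"
    proof (cases "\<exists>z\<in>F. l < \<sigma> z \<omega>")
      case True
      then have "Zf \<omega> \<in> F" "l < \<sigma> (Zf \<omega>) \<omega>" using Zf w by auto
      with w xy show ?thesis unfolding A2_def by auto
    next
      case False
      then show ?thesis using w F unfolding A1_def by auto
    qed
  qed
  have "prob A1 = (\<Prod>z\<in>F. prob (\<sigma> z -` {..l} \<inter> space M))"
    unfolding A1_def by (rule indep_varsD[OF indep]) (use F in auto)
  also have "\<dots> = (\<Prod>z\<in>F. 1 - p l)"
  proof (rule prod.cong)
    fix z
    have "\<sigma> z -` {..l} \<inter> space M = space M - {\<omega>\<in>space M. l < \<sigma> z \<omega>}" by auto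
    then show "prob (\<sigma> z -` {..l} \<inter> space M) = 1 - p l"
      by (simp add: prob_compl pz)
  qed simp
  finally have pA1: "prob A1 = (1 - p l) ^ card F" by simp
  have "prob A2 \<le> (\<Sum>z\<in>F. prob ({\<omega>\<in>space M. l < \<sigma> z \<omega>} - {\<omega>\<in>space M. y < \<sigma> z \<omega>}))"
    unfolding A2_def by (rule finite_measure_subadditive_finite) (use F in auto)
  also have "\<dots> = (\<Sum>z\<in>F. p l - p y)"
  proof (rule sum.cong)
    fix z
    show "prob ({\<omega>\<in>space M. l < \<sigma> z \<omega>} - {\<omega>\<in>space M. y < \<sigma> z \<omega>}) = p l - p y"
      by (subst finite_measure_Diff) (use ly in \<open>auto simp: pz\<close>)
  qed simp
  finally have pA2: "prob A2 \<le> card F * (p l - p y)" by simp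
  have "prob (A1 \<union> A2) \<le> prob A1 + prob A2" using A1m A2m by (rule measure_Un_le)
  with pA1 pA2 sub A1m A2m show ?thesis by (intro bexI[of _ "A1 \<union> A2"]) auto
qed



lemma arith1:
  fixes q py H :: real
  assumes "0 < q" "0 < py" "1 / py < (1 / q) * (1 + 1 / H)" "H > 0"
  shows "q - py \<le> q / (H + 1)"
proof -
  from assms have "q * H < py * (H + 1)" by (simp add: field_simps)
  then show ?thesis using assms by (simp add: field_simps)
qed

lemma arith2:
  fixes q H d :: real and N :: nat
  assumes "0 < q" "q \<le> 1" "H \<ge> 1" "N = nat \<lceil>(1/q) * sqrt H\<rceil>" "0 \<le> d" "d \<le> q / (H + 1)"
  shows "(1 - q) ^ N + N * d \<le> exp (- sqrt H) + (sqrt H + 1) / (H + 1)"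
proof -
  have N1: "real N \<ge> (1/q) * sqrt H" using assms(4) by linarith
  have a0: "(1/q) * sqrt H \<ge> 0" using assms(1,3) by simp
  have N2: "real N \<le> (1/q) * sqrt H + 1"
  proof -
    have "real N = real_of_int \<lceil>(1/q) * sqrt H\<rceil>" using assms(4) a0 by simp
    also have "\<dots> \<le> (1/q) * sqrt H + 1" using ceiling_correct[of "(1/q) * sqrt H"] by linarith
    finally show ?thesis .
  qed
  have "(1 - q) ^ N \<le> exp (- q) ^ N"
    by (rule power_mono) (use assms(2) exp_ge_add_one_self[of "-q"] in auto)
  also have "\<dots> = exp (- (real N * q))" by (simp add: exp_of_nat_mult[symmetric])
  also have "\<dots> \<le> exp (- sqrt H)"
  proof -
    have "sqrt H \<le> real N * q" using N1 assms(1) by (simp add: field_simps)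
    then show ?thesis by simp
  qed
  finally have a: "(1 - q) ^ N \<le> exp (- sqrt H)" .
  have "N * d \<le> N * (q / (H+1))" using assms(6) by (intro mult_left_mono) auto
  also have "\<dots> \<le> ((1/q) * sqrt H + 1) * (q / (H+1))"
    by (rule mult_right_mono[OF N2]) (use assms in auto)
  also have "\<dots> = (sqrt H + q) / (H + 1)"
  proof -
    have "H + 1 \<noteq> 0" using assms(3) by simp
    then show ?thesis using assms(1) by (simp add: divide_simps)
  qed
  also have "\<dots> \<le> (sqrt H + 1) / (H + 1)" using assms(2,3) by (simp add: divide_right_mono)
  finally show ?thesis using a by linarith
qed

lemma lim_g: "((\<lambda>u::real. 2 * (exp (- sqrt u) + (sqrt u + 1) / (u + 1))) \<longlongrightarrow> 0) at_top"
  by real_asymp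



theorem proposition3p10:
  fixes M :: "'a measure" and \<sigma> :: "int \<Rightarrow> 'a \<Rightarrow> real" and h :: "real \<Rightarrow> real"
  assumes "prob_space M"
    and rv: "\<And>z. \<sigma> z \<in> borel_measurable M"
    and indep: "prob_space.indep_vars M (\<lambda>_. borel) \<sigma> UNIV"
    and ident: "\<And>z. distr M borel (\<sigma> z) = distr M borel (\<sigma> 0)"
    and pos: "\<And>z \<omega>. \<omega> \<in> space M \<Longrightarrow> \<sigma> z \<omega> > 0"
    and slow: "\<And>v. v > 0 \<Longrightarrow>
       ((\<lambda>u. tailL M \<sigma> (u * v) / tailL M \<sigma> u) \<longlongrightarrow> 1) at_top"
    and h_inf: "filterlim h at_top at_top"
    and h_small: "(\<lambda>t. (h t)\<^sup>2) \<in> o[at_top](rr M \<sigma>)"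
    and h_bounds: "\<forall>\<^sub>F t in at_top.
       tailL M \<sigma> (ell M \<sigma> t / (h t) ^ 3) > tailL M \<sigma> (ell M \<sigma> t) * (1 - 1 / h t) \<and>
       tailL M \<sigma> (ell M \<sigma> t * (h t) ^ 3) < tailL M \<sigma> (ell M \<sigma> t) * (1 + 1 / h t)"
  shows "((\<lambda>t. measure M (Bh M \<sigma> h t)) \<longlongrightarrow> 1) at_top"
proof -
  interpret P: prob_space M by fact
  note [measurable] = rv
  define p where "p s = measure M {\<omega>\<in>space M. s < \<sigma> 0 \<omega>}" for s
  have tL: "tailL M \<sigma> s = 1 / p s" for s unfolding tailL_def p_def by simp
  have pre: "\<sigma> z -` {s<..} \<inter> space M = {\<omega>\<in>space M. s < \<sigma> z \<omega>}" for z s by auto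
  have op: "{s<..} \<in> sets borel" for s :: real by (rule borel_open) (rule open_greaterThan)
  have pz: "measure M {\<omega>\<in>space M. s < \<sigma> z \<omega>} = p s" for z s
  proof -
    have "measure M {\<omega>\<in>space M. s < \<sigma> z \<omega>} = measure (distr M borel (\<sigma> z)) {s<..}"
      using measure_distr[OF rv[of z] op[of s]] by (simp only: pre)
    also have "\<dots> = measure (distr M borel (\<sigma> 0)) {s<..}" by (subst ident[of z]) (rule refl)
    also have "\<dots> = p s" unfolding p_def
      using measure_distr[OF rv[of 0] op[of s]] by (simp only: pre)
    finally show ?thesis .
  qed
  have p_mono: "p s' \<le> p s" if "s \<le> s'" for s s'
    unfolding p_def using that by (intro P.finite_measure_mono) auto
  have p_le1: "p s \<le> 1" for s unfolding p_def by simp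
  have p_nonneg: "0 \<le> p s" for s unfolding p_def by simp
  have p_pos: "0 < p s" for s
  proof (rule ccontr)
    assume "\<not> 0 < p s"
    then have ps: "p s = 0" using p_nonneg[of s] by simp
    have "\<forall>\<^sub>F u in at_top. tailL M \<sigma> (u * 1) / tailL M \<sigma> u = 0"
      using eventually_ge_at_top[of s]
    proof eventually_elim
      case (elim u)
      then have "p u = 0" using p_mono[of s u] p_nonneg[of u] ps by simp
      then show ?case by (simp add: tL)
    qed
    then have "((\<lambda>u. tailL M \<sigma> (u * 1) / tailL M \<sigma> u) \<longlongrightarrow> 0) at_top"
      by (rule tendsto_eventually)
    moreover have "((\<lambda>u. tailL M \<sigma> (u * 1) / tailL M \<sigma> u) \<longlongrightarrow> 1) at_top" using slow[of 1] by simp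
    ultimately have "(0::real) = 1" using tendsto_unique[OF trivial_limit_at_top_linorder] by blast
    then show False by simp
  qed
  define D where "D = distr M borel (\<sigma> 0)"
  have rd: "real_distribution D" unfolding D_def by (intro P.real_distribution_distr) simp
  interpret D: real_distribution D by (rule rd)
  have pcdf: "p s = 1 - cdf D s" for s
  proof -
    have "p s = measure D {s<..}" unfolding p_def D_def
      using measure_distr[OF rv[of 0] op[of s]] by (simp only: pre)
    also have "{s<..} = space D - {..s}" by (auto simp: D_def)
    also have "measure D \<dots> = 1 - measure D {..s}" by (rule D.prob_compl) simp
    finally show ?thesis by (simp add: cdf_def2)
  qed
  have cont: "continuous (at_right s) p" for s
    unfolding pcdf[abs_def] by (intro continuous_intros D.cdf_is_right_cont)
  have L_ge1: "1 \<le> tailL M \<sigma> s" for s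
    using p_pos[of s] p_le1[of s] by (simp add: tL)
  have ell_prop: "0 \<le> ell M \<sigma> t \<and> t \<le> ell M \<sigma> t * tailL M \<sigma> (ell M \<sigma> t)" for t
  proof -
    define f where "f s = s * tailL M \<sigma> s" for s
    define S where "S = {s. 0 \<le> s \<and> t \<le> f s}"
    have fcont: "continuous (at_right s) f" for s
    proof -
      have "continuous (at_right s) (\<lambda>s. s / p s)"
        using cont[of s] p_pos[of s]
        by (intro continuous_intros) (auto simp: Lim_ident_at)
      then show ?thesis unfolding f_def tL by simp
    qed
    have mem: "max 0 t \<in> S"
    proof -
      have "max 0 t * 1 \<le> max 0 t * tailL M \<sigma> (max 0 t)"
        by (intro mult_left_mono L_ge1) auto
      then show ?thesis unfolding S_def f_def by auto
    qed
    have ne: "S \<noteq> {}" using mem by blast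
    have bdd: "bdd_below S" unfolding S_def bdd_below_def by auto
    define s0 where "s0 = Inf S"
    have s0ge: "0 \<le> s0" unfolding s0_def using ne by (rule cInf_greatest) (auto simp: S_def)
    have "s0 \<in> S"
    proof (rule ccontr)
      assume nS: "s0 \<notin> S"
      then have "f s0 < t" using s0ge by (auto simp: S_def)
      moreover have "(f \<longlongrightarrow> f s0) (at_right s0)" using fcont[of s0] by (simp add: continuous_within)
      ultimately have "\<forall>\<^sub>F s in at_right s0. f s < t" using order_tendstoD(2) by blast
      then obtain b where b: "b > s0" "\<And>s. s0 < s \<Longrightarrow> s < b \<Longrightarrow> f s < t"
        by (auto simp: eventually_at_right_field)
      have "Inf S < b" using b(1) s0_def by simp
      then obtain s where s: "s \<in> S" "s < b" using cInf_less_iff[OF ne bdd] by blast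
      have "s0 \<le> s" unfolding s0_def using s(1) bdd by (rule cInf_lower)
      moreover have "s \<noteq> s0" using s nS by auto
      ultimately have "f s < t" using b s by auto
      then show False using s by (auto simp: S_def)
    qed
    have "ell M \<sigma> t = s0" unfolding ell_def
    proof (rule Least_equality)
      show "0 \<le> s0 \<and> t \<le> s0 * tailL M \<sigma> s0" using \<open>s0 \<in> S\<close> by (simp add: S_def f_def)
      fix y assume "0 \<le> y \<and> t \<le> y * tailL M \<sigma> y"
      then have "y \<in> S" by (simp add: S_def f_def)
      then show "s0 \<le> y" unfolding s0_def using bdd by (rule cInf_lower)
    qed
    then show ?thesis using \<open>s0 \<in> S\<close> by (simp add: S_def f_def)
  qed
  define c1 where "c1 = (LEAST z::int. False)"
  define c2 where "c2 = (GREATEST z::int. False)"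
  have Z1eq: "Z1 M \<sigma> t \<omega> = k \<longleftrightarrow>
      ((\<exists>z>0. ell M \<sigma> t < \<sigma> z \<omega>) \<and> 0 < k \<and> ell M \<sigma> t < \<sigma> k \<omega> \<and>
         (\<forall>j. 0 < j \<and> j < k \<longrightarrow> \<sigma> j \<omega> \<le> ell M \<sigma> t)) \<or>
      (\<not>(\<exists>z>0. ell M \<sigma> t < \<sigma> z \<omega>) \<and> k = c1)" for t \<omega> k
  proof (cases "\<exists>z>0. ell M \<sigma> t < \<sigma> z \<omega>")
    case True
    then obtain z where z: "0 < z" "ell M \<sigma> t < \<sigma> z \<omega>" by auto
    define m where "m = Z1 M \<sigma> t \<omega>"
    have m: "0 < m" "ell M \<sigma> t < \<sigma> m \<omega>"
      using int_least_pos[of z "\<lambda>z. ell M \<sigma> t < \<sigma> z \<omega>"] z unfolding m_def Z1_def by auto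
    have mmin: "m \<le> j" if "0 < j" "ell M \<sigma> t < \<sigma> j \<omega>" for j
      using int_least_pos[of j "\<lambda>z. ell M \<sigma> t < \<sigma> z \<omega>"] that unfolding m_def Z1_def by auto
    have "m = k \<longleftrightarrow> 0 < k \<and> ell M \<sigma> t < \<sigma> k \<omega> \<and> (\<forall>j. 0 < j \<and> j < k \<longrightarrow> \<sigma> j \<omega> \<le> ell M \<sigma> t)"
    proof
      assume "m = k" then show "0 < k \<and> ell M \<sigma> t < \<sigma> k \<omega> \<and> (\<forall>j. 0 < j \<and> j < k \<longrightarrow> \<sigma> j \<omega> \<le> ell M \<sigma> t)"
        using m mmin by (auto simp: not_less[symmetric])
    next
      assume k: "0 < k \<and> ell M \<sigma> t < \<sigma> k \<omega> \<and> (\<forall>j. 0 < j \<and> j < k \<longrightarrow> \<sigma> j \<omega> \<le> ell M \<sigma> t)"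
      then have "m \<le> k" using mmin by auto
      moreover have "\<not> m < k" using k m by force
      ultimately show "m = k" by simp
    qed
    then show ?thesis using True unfolding m_def by simp
  next
    case False
    then have "(\<lambda>z. 0 < z \<and> ell M \<sigma> t < \<sigma> z \<omega>) = (\<lambda>z. False)" by auto
    then have "Z1 M \<sigma> t \<omega> = c1" unfolding Z1_def c1_def by simp
    then show ?thesis using False by auto
  qed
  have Z2eq: "Z2 M \<sigma> t \<omega> = k \<longleftrightarrow>
      ((\<exists>z\<le>0. ell M \<sigma> t < \<sigma> z \<omega>) \<and> k \<le> 0 \<and> ell M \<sigma> t < \<sigma> k \<omega> \<and>
         (\<forall>j. k < j \<and> j \<le> 0 \<longrightarrow> \<sigma> j \<omega> \<le> ell M \<sigma> t)) \<or>
      (\<not>(\<exists>z\<le>0. ell M \<sigma> t < \<sigma> z \<omega>) \<and> k = c2)" for t \<omega> k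
  proof (cases "\<exists>z\<le>0. ell M \<sigma> t < \<sigma> z \<omega>")
    case True
    then obtain z where z: "z \<le> 0" "ell M \<sigma> t < \<sigma> z \<omega>" by auto
    define m where "m = Z2 M \<sigma> t \<omega>"
    have m: "m \<le> 0" "ell M \<sigma> t < \<sigma> m \<omega>"
      using int_greatest_nonpos[of z "\<lambda>z. ell M \<sigma> t < \<sigma> z \<omega>"] z unfolding m_def Z2_def by auto
    have mmin: "j \<le> m" if "j \<le> 0" "ell M \<sigma> t < \<sigma> j \<omega>" for j
      using int_greatest_nonpos[of j "\<lambda>z. ell M \<sigma> t < \<sigma> z \<omega>"] that unfolding m_def Z2_def by auto
    have "m = k \<longleftrightarrow> k \<le> 0 \<and> ell M \<sigma> t < \<sigma> k \<omega> \<and> (\<forall>j. k < j \<and> j \<le> 0 \<longrightarrow> \<sigma> j \<omega> \<le> ell M \<sigma> t)"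
    proof
      assume "m = k" then show "k \<le> 0 \<and> ell M \<sigma> t < \<sigma> k \<omega> \<and> (\<forall>j. k < j \<and> j \<le> 0 \<longrightarrow> \<sigma> j \<omega> \<le> ell M \<sigma> t)"
        using m mmin by (auto simp: not_less[symmetric])
    next
      assume k: "k \<le> 0 \<and> ell M \<sigma> t < \<sigma> k \<omega> \<and> (\<forall>j. k < j \<and> j \<le> 0 \<longrightarrow> \<sigma> j \<omega> \<le> ell M \<sigma> t)"
      then have "k \<le> m" using mmin by auto
      moreover have "\<not> k < m" using k m by force
      ultimately show "m = k" by simp
    qed
    then show ?thesis using True unfolding m_def by simp
  next
    case False
    then have "(\<lambda>z. z \<le> 0 \<and> ell M \<sigma> t < \<sigma> z \<omega>) = (\<lambda>z. False)" by auto
    then have "Z2 M \<sigma> t \<omega> = c2" unfolding Z2_def c2_def by simp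
    then show ?thesis using False by auto
  qed
  have Z1m: "Z1 M \<sigma> t \<in> M \<rightarrow>\<^sub>M count_space UNIV" for t
    unfolding measurable_count_space_eq2_countable
  proof safe
    fix k
    have "Z1 M \<sigma> t -` {k} \<inter> space M = {\<omega>\<in>space M. 
      ((\<exists>z>0. ell M \<sigma> t < \<sigma> z \<omega>) \<and> 0 < k \<and> ell M \<sigma> t < \<sigma> k \<omega> \<and>
         (\<forall>j. 0 < j \<and> j < k \<longrightarrow> \<sigma> j \<omega> \<le> ell M \<sigma> t)) \<or>
      (\<not>(\<exists>z>0. ell M \<sigma> t < \<sigma> z \<omega>) \<and> k = c1)}"
      using Z1eq[of t _ k] by auto
    also have "\<dots> \<in> sets M" by measurable
    finally show "Z1 M \<sigma> t -` {k} \<inter> space M \<in> sets M" .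
  qed auto
  have Z2m: "Z2 M \<sigma> t \<in> M \<rightarrow>\<^sub>M count_space UNIV" for t
    unfolding measurable_count_space_eq2_countable
  proof safe
    fix k
    have "Z2 M \<sigma> t -` {k} \<inter> space M = {\<omega>\<in>space M. 
      ((\<exists>z\<le>0. ell M \<sigma> t < \<sigma> z \<omega>) \<and> k \<le> 0 \<and> ell M \<sigma> t < \<sigma> k \<omega> \<and>
         (\<forall>j. k < j \<and> j \<le> 0 \<longrightarrow> \<sigma> j \<omega> \<le> ell M \<sigma> t)) \<or>
      (\<not>(\<exists>z\<le>0. ell M \<sigma> t < \<sigma> z \<omega>) \<and> k = c2)}"
      using Z2eq[of t _ k] by auto
    also have "\<dots> \<in> sets M" by measurable
    finally show "Z2 M \<sigma> t -` {k} \<inter> space M \<in> sets M" .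
  qed auto
  have g1m: "(\<lambda>\<omega>. \<sigma> (Z1 M \<sigma> t \<omega>) \<omega>) \<in> borel_measurable M" for t
    by (rule measurable_compose_countable[OF rv Z1m])
  have g2m: "(\<lambda>\<omega>. \<sigma> (Z2 M \<sigma> t \<omega>) \<omega>) \<in> borel_measurable M" for t
    by (rule measurable_compose_countable[OF rv Z2m])
  have Bheq: "Bh M \<sigma> h t = {\<omega>\<in>space M. t * (h t)\<^sup>2 / rr M \<sigma> t <
       min (\<sigma> (Z1 M \<sigma> t \<omega>) \<omega>) (\<sigma> (Z2 M \<sigma> t \<omega>) \<omega>)}" for t
    by (simp add: Bh_def mt_def)
  have Bhm: "Bh M \<sigma> h t \<in> sets M" for t
    unfolding Bheq using g1m[of t] g2m[of t] by measurable
  have main: "1 - 2 * (exp (- sqrt (h t)) + (sqrt (h t) + 1) / (h t + 1)) \<le> measure M (Bh M \<sigma> h t)"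
    if H2: "h t \<ge> 2"
      and hb: "tailL M \<sigma> (ell M \<sigma> t * (h t) ^ 3) < tailL M \<sigma> (ell M \<sigma> t) * (1 + 1 / h t)" for t
  proof -
    define l where "l = ell M \<sigma> t"
    define H where "H = h t"
    define r where "r = tailL M \<sigma> l"
    define x where "x = t * H\<^sup>2 / r"
    define y where "y = l * H ^ 3"
    define N where "N = nat \<lceil>(1 / p l) * sqrt H\<rceil>"
    define E where "E = exp (- sqrt H) + (sqrt H + 1) / (H + 1)"
    have H2': "H \<ge> 2" using H2 by (simp add: H_def)
    have r: "r = 1 / p l" by (simp add: r_def tL)
    have l0: "0 \<le> l" and tl: "t \<le> l * r" using ell_prop[of t] by (auto simp: l_def r_def)
    have rpos: "r > 0" using r p_pos[of l] by simp
    have xy: "x \<le> y"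
    proof -
      have "t / r \<le> l" using tl rpos by (simp add: divide_le_eq mult.commute)
      hence "t / r * H\<^sup>2 \<le> l * H\<^sup>2" by (intro mult_right_mono) auto
      also have "l * H\<^sup>2 \<le> l * H ^ 3" using l0 H2' by (intro mult_left_mono power_increasing) auto
      finally show ?thesis by (simp add: x_def y_def)
    qed
    have ly: "l \<le> y"
    proof -
      have "l * 1 \<le> l * H ^ 3" using l0 H2' by (intro mult_left_mono one_le_power) auto
      then show ?thesis by (simp add: y_def)
    qed
    have N1: "N \<ge> 1"
    proof -
      have "(1 / p l) * sqrt H > 0" using p_pos[of l] H2' by simp
      then show ?thesis unfolding N_def by linarith
    qed
    have cF1: "card {1..int N} = N" by simp
    have cF2: "card {1 - int N..0} = N" by simp
    have Zf1: "Z1 M \<sigma> t \<omega> \<in> {1..int N} \<and> l < \<sigma> (Z1 M \<sigma> t \<omega>) \<omega>"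
      if ex: "\<exists>z\<in>{1..int N}. l < \<sigma> z \<omega>" for \<omega>
    proof -
      obtain z where z: "z \<in> {1..int N}" "l < \<sigma> z \<omega>" using ex by auto
      then show ?thesis using int_least_pos[of z "\<lambda>z. l < \<sigma> z \<omega>"]
        unfolding Z1_def l_def by auto
    qed
    have Zf2: "Z2 M \<sigma> t \<omega> \<in> {1 - int N..0} \<and> l < \<sigma> (Z2 M \<sigma> t \<omega>) \<omega>"
      if ex: "\<exists>z\<in>{1 - int N..0}. l < \<sigma> z \<omega>" for \<omega>
    proof -
      obtain z where z: "z \<in> {1 - int N..0}" "l < \<sigma> z \<omega>" using ex by auto
      then show ?thesis using int_greatest_nonpos[of z "\<lambda>z. l < \<sigma> z \<omega>"]
        unfolding Z2_def l_def by auto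
    qed
    obtain A1 where A1: "A1 \<in> sets M" "{\<omega>\<in>space M. \<sigma> (Z1 M \<sigma> t \<omega>) \<omega> \<le> x} \<subseteq> A1"
        "measure M A1 \<le> (1 - p l) ^ N + N * (p l - p y)"
      using P.bound_lemma[OF rv indep, of "{1..int N}" l "Z1 M \<sigma> t" x y p] Zf1 xy ly pz N1 cF1
      by auto
    obtain A2 where A2: "A2 \<in> sets M" "{\<omega>\<in>space M. \<sigma> (Z2 M \<sigma> t \<omega>) \<omega> \<le> x} \<subseteq> A2"
        "measure M A2 \<le> (1 - p l) ^ N + N * (p l - p y)"
      using P.bound_lemma[OF rv indep, of "{1 - int N..0}" l "Z2 M \<sigma> t" x y p] Zf2 xy ly pz N1 cF2
      by auto
    have d0: "0 \<le> p l - p y" using p_mono[OF ly] by simp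
    have d1: "p l - p y \<le> p l / (H + 1)"
    proof (rule arith1)
      show "1 / p y < 1 / p l * (1 + 1 / H)" using hb by (simp add: tL l_def y_def H_def)
    qed (use p_pos H2' in auto)
    have bnd: "(1 - p l) ^ N + N * (p l - p y) \<le> E"
      unfolding E_def by (rule arith2[OF p_pos p_le1 _ N_def d0 d1]) (use H2' in simp)
    have sub: "space M - Bh M \<sigma> h t \<subseteq> A1 \<union> A2"
      using A1(2) A2(2) unfolding Bheq x_def H_def r_def l_def rr_def by auto
    have "measure M (space M - Bh M \<sigma> h t) \<le> measure M (A1 \<union> A2)"
      using sub A1(1) A2(1) by (intro P.finite_measure_mono) auto
    also have "\<dots> \<le> measure M A1 + measure M A2" using A1(1) A2(1) by (rule measure_Un_le)
    finally have "measure M (space M - Bh M \<sigma> h t) \<le> 2 * E" using A1(3) A2(3) bnd by linarith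
    then show ?thesis using P.prob_compl[OF Bhm[of t]] unfolding E_def H_def by linarith
  qed
  define g where "g u = 2 * (exp (- sqrt u) + (sqrt u + 1) / (u + 1))" for u :: real
  have gl: "((\<lambda>t. g (h t)) \<longlongrightarrow> 0) at_top"
    unfolding g_def by (rule filterlim_compose[OF lim_g h_inf])
  have lo: "((\<lambda>t. 1 - g (h t)) \<longlongrightarrow> 1) at_top"
    using tendsto_diff[OF tendsto_const[of 1] gl] by simp
  have ev1: "\<forall>\<^sub>F t in at_top. 1 - g (h t) \<le> measure M (Bh M \<sigma> h t)"
    using h_bounds h_inf[unfolded filterlim_at_top, rule_format, of 2]
    by eventually_elim (use main in \<open>auto simp: g_def\<close>)
  have ev2: "\<forall>\<^sub>F t in at_top. measure M (Bh M \<sigma> h t) \<le> 1" by simp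
  show ?thesis by (rule tendsto_sandwich[OF ev1 ev2 lo tendsto_const])
qed

end
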